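(* Let $R$ be a commutative ring with identity and $S$ a multiplicatively closed subset of $R$. Let $L=Id(R)$ be the multiplicative lattice of all ideals of $R$, and $S_L=\{(a)\in L\mid a\in S\}$. Then an ideal $Q$ of $R$ is an $S$-primary ideal of $R$ if and only if $Q$, viewed as an element of $L$, is an $S_L$-primary element of $L$.
   Context: A proper ideal $Q$ of $R$ is $S$-primary if $S\cap Q=\varnothing$ and there exists $s\in S$ such that for all $a,b\in R$, $ab\in Q$ implies $sa\in Q$ or $sb\in\sqrt Q$ (the usual radical). In a multiplicative lattice $L$ with set $L_*$ of compact elements, the radical is $\sqrt a=\bigvee\{x\in L_*\mid x^n\le a\text{ for some }n\in\mathbb{Z}^+\}$; for a subset $T$ of compact elements, a proper element $q$ with $t\not\le q$ for all $t\in T$ is $T$-primary if there exists $t\in T$ such that for all $c,d\in L$, $cd\le q$ implies $tc\le q$ or $td\le\sqrt q$. In $Id(R)$ the order is inclusion and the multiplication is the product of ideals. *)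

theory Defs
  imports "HOL-Algebra.Ideal_Product"
begin

definition mult_closed :: "('a, 'b) ring_scheme \<Rightarrow> 'a set \<Rightarrow> bool" where
  "mult_closed R S \<longleftrightarrow> S \<subseteq> carrier R \<and> \<one>\<^bsub>R\<^esub> \<in> S \<and>
     (\<forall>s\<in>S. \<forall>t\<in>S. s \<otimes>\<^bsub>R\<^esub> t \<in> S)"

definition ring_radical :: "('a, 'b) ring_scheme \<Rightarrow> 'a set \<Rightarrow> 'a set" where
  "ring_radical R Q = {a \<in> carrier R. \<exists>n::nat. a [^]\<^bsub>R\<^esub> n \<in> Q}"

definition S_primary_ideal :: "('a, 'b) ring_scheme \<Rightarrow> 'a set \<Rightarrow> 'a set \<Rightarrow> bool" where
  "S_primary_ideal R S Q \<longleftrightarrow> ideal Q R \<and> Q \<noteq> carrier R \<and> S \<inter> Q = {} \<and>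
     (\<exists>s\<in>S. \<forall>a\<in>carrier R. \<forall>b\<in>carrier R.
        a \<otimes>\<^bsub>R\<^esub> b \<in> Q \<longrightarrow> s \<otimes>\<^bsub>R\<^esub> a \<in> Q \<or> s \<otimes>\<^bsub>R\<^esub> b \<in> ring_radical R Q)"

definition ml_compact :: "'l set \<Rightarrow> ('l \<Rightarrow> 'l \<Rightarrow> bool) \<Rightarrow> ('l set \<Rightarrow> 'l) \<Rightarrow> 'l \<Rightarrow> bool" where
  "ml_compact L leq lsup x \<longleftrightarrow> x \<in> L \<and>
     (\<forall>A. A \<subseteq> L \<longrightarrow> leq x (lsup A) \<longrightarrow> (\<exists>B. B \<subseteq> A \<and> finite B \<and> leq x (lsup B)))"

text \<open>Powers x^n for n \<ge> 1 (the value at n = 0 is irrelevant and never used).\<close>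
fun ml_pow :: "('l \<Rightarrow> 'l \<Rightarrow> 'l) \<Rightarrow> 'l \<Rightarrow> nat \<Rightarrow> 'l" where
  "ml_pow lmult x 0 = x"
| "ml_pow lmult x (Suc 0) = x"
| "ml_pow lmult x (Suc (Suc n)) = lmult x (ml_pow lmult x (Suc n))"

definition ml_radical :: "'l set \<Rightarrow> ('l \<Rightarrow> 'l \<Rightarrow> bool) \<Rightarrow> ('l \<Rightarrow> 'l \<Rightarrow> 'l) \<Rightarrow> ('l set \<Rightarrow> 'l) \<Rightarrow> 'l \<Rightarrow> 'l" where
  "ml_radical L leq lmult lsup a =
     lsup {x. ml_compact L leq lsup x \<and> (\<exists>n::nat. n \<ge> 1 \<and> leq (ml_pow lmult x n) a)}"

definition ml_T_primary :: "'l set \<Rightarrow> ('l \<Rightarrow> 'l \<Rightarrow> bool) \<Rightarrow> ('l \<Rightarrow> 'l \<Rightarrow> 'l) \<Rightarrow> ('l set \<Rightarrow> 'l) \<Rightarrow> 'l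
      \<Rightarrow> 'l set \<Rightarrow> 'l \<Rightarrow> bool" where
  "ml_T_primary L leq lmult lsup ltop T q \<longleftrightarrow> q \<in> L \<and> q \<noteq> ltop \<and> (\<forall>t\<in>T. \<not> leq t q) \<and>
     (\<exists>t\<in>T. \<forall>c\<in>L. \<forall>d\<in>L. leq (lmult c d) q \<longrightarrow>
        leq (lmult t c) q \<or> leq (lmult t d) (ml_radical L leq lmult lsup q))"

definition Id_carrier :: "('a, 'b) ring_scheme \<Rightarrow> 'a set set" where
  "Id_carrier R = {I. ideal I R}"

definition Id_Sup :: "('a, 'b) ring_scheme \<Rightarrow> 'a set set \<Rightarrow> 'a set" where
  "Id_Sup R A = Idl\<^bsub>R\<^esub> (\<Union>A)"

definition S_L :: "('a, 'b) ring_scheme \<Rightarrow> 'a set \<Rightarrow> 'a set set" where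
  "S_L R S = {PIdl\<^bsub>R\<^esub> a | a. a \<in> S}"

definition Id_T_primary :: "('a, 'b) ring_scheme \<Rightarrow> 'a set set \<Rightarrow> 'a set \<Rightarrow> bool" where
  "Id_T_primary R T Q =
     ml_T_primary (Id_carrier R) (\<subseteq>) (ideal_prod R) (Id_Sup R) (carrier R) T Q"

end

theory Submission
  imports Defs
begin

context cring
begin

lemma prod_sub:
  assumes "ideal K R" "\<And>i j. i \<in> I \<Longrightarrow> j \<in> J \<Longrightarrow> i \<otimes> j \<in> K"
  shows "I \<cdot> J \<subseteq> K"
proof
  fix x assume "x \<in> I \<cdot> J" then show "x \<in> K"
    by (induct x rule: ideal_prod.induct)
       (auto simp: assms(2) additive_subgroup.a_closed[OF ideal.axioms(1)[OF assms(1)]])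
qed

lemma PIdl_prod:
  assumes "a \<in> carrier R" "b \<in> carrier R"
  shows "(PIdl a) \<cdot> (PIdl b) = PIdl (a \<otimes> b)"
proof
  show "(PIdl a) \<cdot> (PIdl b) \<subseteq> PIdl (a \<otimes> b)"
  proof (rule prod_sub)
    show "ideal (PIdl (a \<otimes> b)) R" using assms by (simp add: cgenideal_ideal)
    fix i j assume "i \<in> PIdl a" "j \<in> PIdl b"
    then obtain x y where xy: "x \<in> carrier R" "y \<in> carrier R" "i = x \<otimes> a" "j = y \<otimes> b"
      unfolding cgenideal_def by blast
    then have "i \<otimes> j = (x \<otimes> y) \<otimes> (a \<otimes> b)" using assms
      by (simp add: m_ac)
    then show "i \<otimes> j \<in> PIdl (a \<otimes> b)" unfolding cgenideal_def using xy by blast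
  qed
next
  have "a \<otimes> b \<in> (PIdl a) \<cdot> (PIdl b)"
    using assms by (simp add: cgenideal_self ideal_prod.prod)
  then show "PIdl (a \<otimes> b) \<subseteq> (PIdl a) \<cdot> (PIdl b)"
    using assms by (simp add: cgenideal_minimal cgenideal_ideal ideal_prod_is_ideal)
qed

lemma pow_one': "x \<in> carrier R \<Longrightarrow> x [^] (Suc 0) = x"
  by (simp add: nat_pow_Suc)

lemma ml_pow_PIdl:
  assumes "a \<in> carrier R"
  shows "ml_pow (ideal_prod R) (PIdl a) (Suc n) = PIdl (a [^] (Suc n))"
proof (induct n)
  case 0 then show ?case using assms by (simp add: pow_one')
next
  case (Suc n)
  have "ml_pow (ideal_prod R) (PIdl a) (Suc (Suc n)) = (PIdl a) \<cdot> (PIdl (a [^] Suc n))"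
    using Suc by simp
  also have "\<dots> = PIdl (a \<otimes> a [^] Suc n)" using assms by (simp add: PIdl_prod)
  also have "a \<otimes> a [^] Suc n = a [^] Suc (Suc n)" using assms by (rule nat_pow_Suc2[symmetric])
  finally show ?case .
qed

lemma pow_mem:
  assumes "ideal I R" "y \<in> I"
  shows "y [^] (Suc n) \<in> ml_pow (ideal_prod R) I (Suc n)"
proof (induct n)
  case 0 then show ?case using assms by (simp add: pow_one' ideal.Icarr)
next
  case (Suc n)
  have "y \<otimes> y [^] Suc n \<in> I \<cdot> ml_pow (ideal_prod R) I (Suc n)"
    using Suc assms by (simp add: ideal_prod.prod)
  moreover have "y \<otimes> y [^] Suc n = y [^] Suc (Suc n)"
    using assms by (metis nat_pow_Suc2 ideal.Icarr)
  ultimately show ?case by simp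
qed

lemma colon_ideal:
  assumes "ideal Q R" "a \<in> carrier R"
  shows "ideal {x \<in> carrier R. a \<otimes> x \<in> Q} R"
proof -
  interpret Q: ideal Q R by fact
  show ?thesis
  proof (rule idealI[OF ring_axioms])
    show "subgroup {x \<in> carrier R. a \<otimes> x \<in> Q} (add_monoid R)"
    proof (rule subgroup.intro)
      show "{x \<in> carrier R. a \<otimes> x \<in> Q} \<subseteq> carrier (add_monoid R)" by auto
      show "\<And>x y. x \<in> {x \<in> carrier R. a \<otimes> x \<in> Q} \<Longrightarrow> y \<in> {x \<in> carrier R. a \<otimes> x \<in> Q}
         \<Longrightarrow> x \<otimes>\<^bsub>add_monoid R\<^esub> y \<in> {x \<in> carrier R. a \<otimes> x \<in> Q}"
        using assms(2) by (auto simp: r_distr Q.a_closed)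
      show "\<one>\<^bsub>add_monoid R\<^esub> \<in> {x \<in> carrier R. a \<otimes> x \<in> Q}"
        using assms(2) by simp
      show "\<And>x. x \<in> {x \<in> carrier R. a \<otimes> x \<in> Q} \<Longrightarrow> inv\<^bsub>add_monoid R\<^esub> x \<in> {x \<in> carrier R. a \<otimes> x \<in> Q}"
        using assms(2) by (auto simp: a_inv_def[symmetric] r_minus Q.a_inv_closed)
    qed
  next
    fix b x assume "b \<in> {x \<in> carrier R. a \<otimes> x \<in> Q}" "x \<in> carrier R"
    then have b: "b \<in> carrier R" "a \<otimes> b \<in> Q" and x: "x \<in> carrier R" by auto
    have "a \<otimes> (x \<otimes> b) = x \<otimes> (a \<otimes> b)" using b x assms(2) by (simp add: m_lcomm)
    then show "x \<otimes> b \<in> {x \<in> carrier R. a \<otimes> x \<in> Q}" using b x by (simp add: Q.I_l_closed)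
    have "a \<otimes> (b \<otimes> x) = (a \<otimes> b) \<otimes> x" using b x assms(2) by (simp add: m_assoc)
    then show "b \<otimes> x \<in> {x \<in> carrier R. a \<otimes> x \<in> Q}" using b x by (simp add: Q.I_r_closed)
  qed
qed

lemma sum_pow_mem:
  fixes k :: nat
  shows "\<And>Q a b (m::nat) (n::nat). ideal Q R \<Longrightarrow> a \<in> carrier R \<Longrightarrow> b \<in> carrier R \<Longrightarrow> a [^] m \<in> Q \<Longrightarrow> b [^] n \<in> Q
    \<Longrightarrow> k = m + n \<Longrightarrow> (a \<oplus> b) [^] k \<in> Q"
proof (induct k rule: less_induct)
  case (less k Q a b m n)
  interpret Q: ideal Q R by fact
  have ab: "a \<oplus> b \<in> carrier R" using less by simp
  show ?case
  proof (cases "m = 0 \<or> n = 0")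
    case True
    then have "\<one> \<in> Q" using less by auto
    then have "Q = carrier R" by (rule Q.one_imp_carrier)
    then show ?thesis using ab by simp
  next
    case False
    then obtain m' n' where mn: "m = Suc m'" "n = Suc n'" by (metis not0_implies_Suc)
    define N where "N = m' + n"
    have N2: "N = m + n'" using mn N_def by simp
    have kN: "k = Suc N" using less mn N_def by simp
    have c1: "a \<otimes> (a \<oplus> b) [^] N \<in> Q"
    proof -
      have "(a \<oplus> b) [^] N \<in> {x \<in> carrier R. a \<otimes> x \<in> Q}"
      proof (rule less(1)[of N _ a b m' n])
        show "N < k" using kN by simp
        show "ideal {x \<in> carrier R. a \<otimes> x \<in> Q} R" using colon_ideal less by simp
        show "a [^] m' \<in> {x \<in> carrier R. a \<otimes> x \<in> Q}"
          using less mn by (simp add: nat_pow_Suc2[symmetric])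
        show "b [^] n \<in> {x \<in> carrier R. a \<otimes> x \<in> Q}"
          using less by (simp add: Q.I_l_closed)
      qed (use less N_def in auto)
      then show ?thesis by simp
    qed
    have c2: "b \<otimes> (a \<oplus> b) [^] N \<in> Q"
    proof -
      have "(a \<oplus> b) [^] N \<in> {x \<in> carrier R. b \<otimes> x \<in> Q}"
      proof (rule less(1)[of N _ a b m n'])
        show "N < k" using kN by simp
        show "ideal {x \<in> carrier R. b \<otimes> x \<in> Q} R" using colon_ideal less by simp
        show "b [^] n' \<in> {x \<in> carrier R. b \<otimes> x \<in> Q}"
          using less mn by (simp add: nat_pow_Suc2[symmetric])
        show "a [^] m \<in> {x \<in> carrier R. b \<otimes> x \<in> Q}"
          using less by (simp add: Q.I_l_closed)
      qed (use less N2 in auto)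
      then show ?thesis by simp
    qed
    have p: "(a \<oplus> b) [^] N \<in> carrier R" using ab by simp
    have "(a \<oplus> b) [^] k = (a \<oplus> b) \<otimes> (a \<oplus> b) [^] N"
      unfolding kN by (rule nat_pow_Suc2[OF ab])
    also have "\<dots> = a \<otimes> (a \<oplus> b) [^] N \<oplus> b \<otimes> (a \<oplus> b) [^] N"
      using less p by (simp add: l_distr)
    finally have "(a \<oplus> b) [^] k = a \<otimes> (a \<oplus> b) [^] N \<oplus> b \<otimes> (a \<oplus> b) [^] N" .
    then show ?thesis using c1 c2 by (simp add: Q.a_closed)
  qed
qed

lemma rad_ideal:
  assumes "ideal Q R"
  shows "ideal (ring_radical R Q) R"
proof -
  interpret Q: ideal Q R by fact
  have mul: "r \<otimes> a \<in> ring_radical R Q" if "a \<in> ring_radical R Q" "r \<in> carrier R" for a r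
  proof -
    from that obtain n :: nat where "a \<in> carrier R" "a [^] n \<in> Q" unfolding ring_radical_def by auto
    then have "(r \<otimes> a) [^] n \<in> Q" using that by (simp add: nat_pow_distrib Q.I_l_closed)
    then show ?thesis using that \<open>a \<in> carrier R\<close> unfolding ring_radical_def by auto
  qed
  show ?thesis
  proof (rule idealI[OF ring_axioms])
    show "subgroup (ring_radical R Q) (add_monoid R)"
    proof (rule subgroup.intro)
      show "ring_radical R Q \<subseteq> carrier (add_monoid R)" unfolding ring_radical_def by auto
      show "\<And>x y. x \<in> ring_radical R Q \<Longrightarrow> y \<in> ring_radical R Q
         \<Longrightarrow> x \<otimes>\<^bsub>add_monoid R\<^esub> y \<in> ring_radical R Q"
        unfolding ring_radical_def using sum_pow_mem[OF assms _ _ _ _ refl] by (auto, blast)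
      have "\<zero> [^] (Suc 0) \<in> Q" by (simp add: pow_one')
      then show "\<one>\<^bsub>add_monoid R\<^esub> \<in> ring_radical R Q" unfolding ring_radical_def by (simp, blast)
      fix x assume x: "x \<in> ring_radical R Q"
      then have "x \<in> carrier R" unfolding ring_radical_def by auto
      then have "inv\<^bsub>add_monoid R\<^esub> x = (\<ominus> \<one>) \<otimes> x" by (simp add: a_inv_def[symmetric] l_minus)
      then show "inv\<^bsub>add_monoid R\<^esub> x \<in> ring_radical R Q" using mul[OF x] by simp
    qed
  next
    fix a x assume "a \<in> ring_radical R Q" "x \<in> carrier R"
    then show "x \<otimes> a \<in> ring_radical R Q" "a \<otimes> x \<in> ring_radical R Q"
      using mul by (auto simp: m_comm ring_radical_def)
  qed
qed

lemma Union_carr: "B \<subseteq> {I. ideal I R} \<Longrightarrow> \<Union>B \<subseteq> carrier R"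
proof
  fix x assume B: "B \<subseteq> {I. ideal I R}" and "x \<in> \<Union>B"
  then obtain I where "I \<in> B" "x \<in> I" by blast
  with B show "x \<in> carrier R" using ideal.Icarr[of I R x] by auto
qed

lemma PIdl_compact:
  assumes a: "a \<in> carrier R"
  shows "ml_compact (Id_carrier R) (\<subseteq>) (Id_Sup R) (PIdl a)"
  unfolding ml_compact_def Id_carrier_def Id_Sup_def
proof (intro conjI allI impI)
  show "PIdl a \<in> {I. ideal I R}" using a by (simp add: cgenideal_ideal)
  fix A assume A: "A \<subseteq> {I. ideal I R}" and sub: "PIdl a \<subseteq> Idl (\<Union>A)"
  define U where "U = \<Union>{Idl (\<Union>B) | B. B \<subseteq> A \<and> finite B}"
  have mono: "Idl (\<Union>B1) \<subseteq> Idl (\<Union>(B1 \<union> B2))" if "B1 \<union> B2 \<subseteq> A" for B1 B2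
    by (rule subset_Idl_subset) (use that A Union_carr[of "B1 \<union> B2"] in auto)
  have idB: "ideal (Idl (\<Union>B)) R" if "B \<subseteq> A" for B
    using that A Union_carr[of B] by (intro genideal_ideal) auto
  have two: "\<exists>B. B \<subseteq> A \<and> finite B \<and> x \<in> Idl (\<Union>B) \<and> y \<in> Idl (\<Union>B)"
    if "x \<in> U" "y \<in> U" for x y
  proof -
    from that obtain B1 B2 where "B1 \<subseteq> A" "finite B1" "x \<in> Idl (\<Union>B1)"
      "B2 \<subseteq> A" "finite B2" "y \<in> Idl (\<Union>B2)" unfolding U_def by blast
    moreover have "B2 \<union> B1 = B1 \<union> B2" by blast
    ultimately show ?thesis using mono[of B1 B2] mono[of B2 B1]
      by (intro exI[of _ "B1 \<union> B2"]) auto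
  qed
  have one: "\<exists>B. B \<subseteq> A \<and> finite B \<and> x \<in> Idl (\<Union>B)" if "x \<in> U" for x
    using that unfolding U_def by blast
  have U_ideal: "ideal U R"
  proof (rule idealI[OF ring_axioms])
    show "subgroup U (add_monoid R)"
    proof (rule subgroup.intro)
      show "U \<subseteq> carrier (add_monoid R)"
      proof
        fix x assume "x \<in> U"
        from one[OF this] obtain B where "B \<subseteq> A" "x \<in> Idl (\<Union>B)" by blast
        then show "x \<in> carrier (add_monoid R)" using ideal.Icarr[OF idB[of B]] by simp
      qed
      show "x \<otimes>\<^bsub>add_monoid R\<^esub> y \<in> U" if "x \<in> U" "y \<in> U" for x y
      proof -
        from two[OF that] obtain B where "B \<subseteq> A" "finite B" "x \<in> Idl (\<Union>B)" "y \<in> Idl (\<Union>B)" by blast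
        then show ?thesis using idB[of B] unfolding U_def
          by (auto intro!: additive_subgroup.a_closed[OF ideal.axioms(1)])
      qed
      have "\<zero> \<in> Idl (\<Union>{})" using idB[of "{}"] additive_subgroup.zero_closed[OF ideal.axioms(1)] by auto
      then show "\<one>\<^bsub>add_monoid R\<^esub> \<in> U" unfolding U_def by auto
      show "inv\<^bsub>add_monoid R\<^esub> x \<in> U" if "x \<in> U" for x
      proof -
        from one[OF that] obtain B where "B \<subseteq> A" "finite B" "x \<in> Idl (\<Union>B)" by blast
        then show ?thesis using idB[of B] unfolding U_def
          by (auto simp: a_inv_def[symmetric] intro!: additive_subgroup.a_inv_closed[OF ideal.axioms(1)])
      qed
    qed
  next
    fix b x assume "b \<in> U" "x \<in> carrier R"
    from one[OF \<open>b \<in> U\<close>] obtain B where "B \<subseteq> A" "finite B" "b \<in> Idl (\<Union>B)" by blast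
    then have "x \<otimes> b \<in> Idl (\<Union>B)" "b \<otimes> x \<in> Idl (\<Union>B)"
      using ideal.I_l_closed[OF idB[of B]] ideal.I_r_closed[OF idB[of B]] \<open>x \<in> carrier R\<close> by auto
    then show "x \<otimes> b \<in> U" "b \<otimes> x \<in> U" using \<open>B \<subseteq> A\<close> \<open>finite B\<close> unfolding U_def by blast+
  qed
  have "\<Union>A \<subseteq> U"
  proof
    fix x assume "x \<in> \<Union>A"
    then obtain I where "I \<in> A" "x \<in> I" by blast
    then have "x \<in> Idl (\<Union>{I})" using A by (intro genideal_self[THEN subsetD]) (auto intro: ideal.Icarr)
    then show "x \<in> U" unfolding U_def using \<open>I \<in> A\<close> by blast
  qed
  then have "Idl (\<Union>A) \<subseteq> U" using U_ideal by (rule genideal_minimal[rotated])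
  then have "a \<in> U" using sub cgenideal_self[OF a] by blast
  then obtain B where B: "B \<subseteq> A" "finite B" "a \<in> Idl (\<Union>B)" using one by blast
  then show "\<exists>B. B \<subseteq> A \<and> finite B \<and> PIdl a \<subseteq> Idl (\<Union>B)"
    using idB[of B] cgenideal_minimal by blast
qed

abbreviation "radL Q \<equiv> ml_radical (Id_carrier R) (\<subseteq>) (ideal_prod R) (Id_Sup R) Q"

lemma radL_carr:
  "\<Union>{x. ml_compact (Id_carrier R) (\<subseteq>) (Id_Sup R) x \<and> (\<exists>n::nat. n \<ge> 1 \<and> ml_pow (ideal_prod R) x n \<subseteq> Q)} \<subseteq> carrier R"
proof
  fix y assume "y \<in> \<Union>{x. ml_compact (Id_carrier R) (\<subseteq>) (Id_Sup R) x \<and> (\<exists>n::nat. n \<ge> 1 \<and> ml_pow (ideal_prod R) x n \<subseteq> Q)}"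
  then obtain I where "ideal I R" "y \<in> I" unfolding ml_compact_def Id_carrier_def by blast
  then show "y \<in> carrier R" using ideal.Icarr[of I R y] by auto
qed

lemma Id_Sup_ideal: "\<Union>A \<subseteq> carrier R \<Longrightarrow> ideal (Id_Sup R A) R"
  unfolding Id_Sup_def by (rule genideal_ideal)

lemma Id_Sup_minimal: "ideal I R \<Longrightarrow> \<Union>A \<subseteq> I \<Longrightarrow> Id_Sup R A \<subseteq> I"
  unfolding Id_Sup_def by (rule genideal_minimal)

lemma Id_Sup_self: "\<Union>A \<subseteq> carrier R \<Longrightarrow> \<Union>A \<subseteq> Id_Sup R A"
  unfolding Id_Sup_def by (rule genideal_self)

lemma radL_ideal: "ideal (radL Q) R"
  unfolding ml_radical_def by (rule Id_Sup_ideal[OF radL_carr])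

lemma radL_sub:
  assumes Q: "ideal Q R"
  shows "radL Q \<subseteq> ring_radical R Q"
  unfolding ml_radical_def
proof (rule Id_Sup_minimal[OF rad_ideal[OF Q]])
  show "\<Union>{x. ml_compact (Id_carrier R) (\<subseteq>) (Id_Sup R) x \<and> (\<exists>n::nat. n \<ge> 1 \<and> ml_pow (ideal_prod R) x n \<subseteq> Q)} \<subseteq> ring_radical R Q"
  proof
    fix y assume "y \<in> \<Union>{x. ml_compact (Id_carrier R) (\<subseteq>) (Id_Sup R) x \<and> (\<exists>n::nat. n \<ge> 1 \<and> ml_pow (ideal_prod R) x n \<subseteq> Q)}"
    then obtain x where x0: "y \<in> x" "ml_compact (Id_carrier R) (\<subseteq>) (Id_Sup R) x"
        "\<exists>n::nat. n \<ge> 1 \<and> ml_pow (ideal_prod R) x n \<subseteq> Q" by blast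
    then obtain n :: nat where n1: "n \<ge> 1" "ml_pow (ideal_prod R) x n \<subseteq> Q" by blast
    have xi: "ideal x R" using x0(2) unfolding ml_compact_def Id_carrier_def by simp
    then have yc: "y \<in> carrier R" using x0(1) ideal.Icarr[of x R y] by simp
    obtain m where n: "n = Suc m" using n1 by (cases n) auto
    have "y [^] n \<in> Q" using pow_mem[OF xi x0(1), of m] n1 n by auto
    then show "y \<in> ring_radical R Q" unfolding ring_radical_def using yc by auto
  qed
qed

lemma rad_sub_radL:
  assumes Q: "ideal Q R" and a: "a \<in> ring_radical R Q"
  shows "a \<in> radL Q"
proof -
  from a obtain n :: nat where ac: "a \<in> carrier R" and an: "a [^] n \<in> Q" unfolding ring_radical_def by auto
  have "a [^] Suc n \<in> Q" using an ac by (simp add: nat_pow_Suc ideal.I_r_closed[OF Q])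
  then have "ml_pow (ideal_prod R) (PIdl a) (Suc n) \<subseteq> Q"
    using ac by (simp add: ml_pow_PIdl cgenideal_minimal[OF Q])
  then have "PIdl a \<in> {x. ml_compact (Id_carrier R) (\<subseteq>) (Id_Sup R) x \<and> (\<exists>n::nat. n \<ge> 1 \<and> ml_pow (ideal_prod R) x n \<subseteq> Q)}"
    using PIdl_compact[OF ac] by (auto intro!: exI[of _ "Suc n"])
  then have "a \<in> \<Union>{x. ml_compact (Id_carrier R) (\<subseteq>) (Id_Sup R) x \<and> (\<exists>n::nat. n \<ge> 1 \<and> ml_pow (ideal_prod R) x n \<subseteq> Q)}"
    using cgenideal_self[OF ac] by blast
  then show ?thesis unfolding ml_radical_def using Id_Sup_self[OF radL_carr] by blast
qed

lemma main_cring: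
  assumes MC: "mult_closed R S" and Q: "ideal Q R"
  shows "S_primary_ideal R S Q \<longleftrightarrow> Id_T_primary R (S_L R S) Q"
proof
  have Sc: "S \<subseteq> carrier R" using MC unfolding mult_closed_def by simp
  assume "S_primary_ideal R S Q"
  then obtain s where s: "s \<in> S" and ne: "Q \<noteq> carrier R" and dis: "S \<inter> Q = {}"
    and H: "\<forall>a\<in>carrier R. \<forall>b\<in>carrier R. a \<otimes> b \<in> Q \<longrightarrow> s \<otimes> a \<in> Q \<or> s \<otimes> b \<in> ring_radical R Q"
    unfolding S_primary_ideal_def by blast
  have sc: "s \<in> carrier R" using s Sc by auto
  show "Id_T_primary R (S_L R S) Q"
    unfolding Id_T_primary_def ml_T_primary_def
  proof (intro conjI ballI)
    show "Q \<in> Id_carrier R" using Q by (simp add: Id_carrier_def)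
    show "Q \<noteq> carrier R" by fact
  next
    fix t assume "t \<in> S_L R S"
    then obtain s' where s': "s' \<in> S" "t = PIdl s'" unfolding S_L_def by blast
    then have "s' \<in> t" using Sc cgenideal_self[of s'] by blast
    moreover have "s' \<notin> Q" using dis s' by blast
    ultimately show "\<not> t \<subseteq> Q" by blast
  next
    show "\<exists>t\<in>S_L R S. \<forall>c\<in>Id_carrier R. \<forall>d\<in>Id_carrier R. c \<cdot> d \<subseteq> Q \<longrightarrow> t \<cdot> c \<subseteq> Q \<or> t \<cdot> d \<subseteq> radL Q"
    proof (rule bexI[of _ "PIdl s"])
      show "PIdl s \<in> S_L R S" using s unfolding S_L_def by blast
      show "\<forall>c\<in>Id_carrier R. \<forall>d\<in>Id_carrier R. c \<cdot> d \<subseteq> Q \<longrightarrow> (PIdl s) \<cdot> c \<subseteq> Q \<or> (PIdl s) \<cdot> d \<subseteq> radL Q"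
      proof (intro ballI impI)
        fix C D assume C: "C \<in> Id_carrier R" and D: "D \<in> Id_carrier R" and CD: "C \<cdot> D \<subseteq> Q"
        have Ci: "ideal C R" "ideal D R" using C D unfolding Id_carrier_def by auto
        show "(PIdl s) \<cdot> C \<subseteq> Q \<or> (PIdl s) \<cdot> D \<subseteq> radL Q"
        proof (cases "\<forall>c\<in>C. s \<otimes> c \<in> Q")
          case True
          have "(PIdl s) \<cdot> C \<subseteq> Q"
          proof (rule prod_sub[OF Q])
            fix i j assume "i \<in> PIdl s" "j \<in> C"
            then obtain x where x: "x \<in> carrier R" "i = x \<otimes> s" unfolding cgenideal_def by blast
            have jc: "j \<in> carrier R" using ideal.Icarr[OF Ci(1) \<open>j \<in> C\<close>] .
            have "i \<otimes> j = x \<otimes> (s \<otimes> j)" using x sc jc by (simp add: m_assoc)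
            then show "i \<otimes> j \<in> Q" using True \<open>j \<in> C\<close> x ideal.I_l_closed[OF Q] by simp
          qed
          then show ?thesis by blast
        next
          case False
          then obtain c where c: "c \<in> C" "s \<otimes> c \<notin> Q" by blast
          have cc: "c \<in> carrier R" using ideal.Icarr[OF Ci(1) c(1)] .
          have "(PIdl s) \<cdot> D \<subseteq> radL Q"
          proof (rule prod_sub[OF radL_ideal])
            fix i j assume "i \<in> PIdl s" "j \<in> D"
            then obtain x where x: "x \<in> carrier R" "i = x \<otimes> s" unfolding cgenideal_def by blast
            have jc: "j \<in> carrier R" using ideal.Icarr[OF Ci(2) \<open>j \<in> D\<close>] .
            have xj: "x \<otimes> j \<in> D" using ideal.I_l_closed[OF Ci(2) \<open>j \<in> D\<close> x(1)] .
            have xjc: "x \<otimes> j \<in> carrier R" using x jc by simp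
            have "c \<otimes> (x \<otimes> j) \<in> Q" using CD ideal_prod.prod[OF c(1) xj] by blast
            then have "s \<otimes> (x \<otimes> j) \<in> ring_radical R Q" using H cc xjc c(2) by blast
            then have "s \<otimes> (x \<otimes> j) \<in> radL Q" by (rule rad_sub_radL[OF Q])
            moreover have "i \<otimes> j = s \<otimes> (x \<otimes> j)" using x sc jc by (simp add: m_ac)
            ultimately show "i \<otimes> j \<in> radL Q" by simp
          qed
          then show ?thesis by blast
        qed
      qed
    qed
  qed
next
  have Sc: "S \<subseteq> carrier R" using MC unfolding mult_closed_def by simp
  assume A: "Id_T_primary R (S_L R S) Q"
  then have ne: "Q \<noteq> carrier R" and nt: "\<forall>t\<in>S_L R S. \<not> t \<subseteq> Q"
    unfolding Id_T_primary_def ml_T_primary_def by blast+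
  from A obtain t where t: "t \<in> S_L R S" and
    H: "\<forall>c\<in>Id_carrier R. \<forall>d\<in>Id_carrier R. c \<cdot> d \<subseteq> Q \<longrightarrow> t \<cdot> c \<subseteq> Q \<or> t \<cdot> d \<subseteq> radL Q"
    unfolding Id_T_primary_def ml_T_primary_def by blast
  from t obtain s where s: "s \<in> S" "t = PIdl s" unfolding S_L_def by blast
  have sc: "s \<in> carrier R" using s Sc by auto
  show "S_primary_ideal R S Q" unfolding S_primary_ideal_def
  proof (intro conjI bexI[of _ s] ballI impI)
    show "ideal Q R" by fact
    show "Q \<noteq> carrier R" by fact
    show "s \<in> S" by fact
    show "S \<inter> Q = {}"
    proof (rule ccontr)
      assume "S \<inter> Q \<noteq> {}"
      then obtain s' where s': "s' \<in> S" "s' \<in> Q" by blast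
      then have "PIdl s' \<in> S_L R S" unfolding S_L_def by blast
      moreover have "PIdl s' \<subseteq> Q" using cgenideal_minimal[OF Q s'(2)] .
      ultimately show False using nt by blast
    qed
  next
    fix a b assume a: "a \<in> carrier R" and b: "b \<in> carrier R" and ab: "a \<otimes> b \<in> Q"
    have "(PIdl a) \<cdot> (PIdl b) \<subseteq> Q" using PIdl_prod[OF a b] cgenideal_minimal[OF Q ab] by simp
    moreover have "PIdl a \<in> Id_carrier R" "PIdl b \<in> Id_carrier R"
      using a b cgenideal_ideal unfolding Id_carrier_def by auto
    ultimately have "(PIdl s) \<cdot> (PIdl a) \<subseteq> Q \<or> (PIdl s) \<cdot> (PIdl b) \<subseteq> radL Q"
      using H s(2) by blast
    moreover have "s \<otimes> a \<in> (PIdl s) \<cdot> (PIdl a)" "s \<otimes> b \<in> (PIdl s) \<cdot> (PIdl b)"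
      using sc a b by (simp_all add: cgenideal_self ideal_prod.prod)
    ultimately show "s \<otimes> a \<in> Q \<or> s \<otimes> b \<in> ring_radical R Q"
      using radL_sub[OF Q] by blast
  qed
qed

end

theorem mainTheorem5:
  fixes R :: "('a, 'b) ring_scheme" and S Q :: "'a set"
  assumes "cring R"
    and "mult_closed R S"
    and "ideal Q R"
  shows "S_primary_ideal R S Q \<longleftrightarrow> Id_T_primary R (S_L R S) Q"
  by (rule cring.main_cring[OF assms])

end
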